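(* Let $A$ be an eNTA with a single clock $x$, and let $\gamma = q_0\tau_1 q_1\tau_2\cdots\tau_n q_n$ be a reachable path of $A$. For $1\le i\le n$ let $T_i$ be the set of times at which the $i$-th transition $\tau_i$ is taken, over all runs along $\gamma$, and let $s_i^{\gamma} := \sup T_i - \inf T_i \in \mathbb{R}_{\ge 0}\cup\{\infty\}$. Let $d_i^{\gamma}$ be the feasible durations and $w_i^{\gamma}$ the trail widths defined in the context. Then for every $1\le i\le n$, $$ s_i^{\gamma} = w_{i-1}^{\gamma} + d_i^{\gamma}, $$ and $$ w_i^{\gamma} = \begin{cases} 0 & \text{if } i=0,\\ s_i^{\gamma} & \text{if } i>0 \text{ and } x \text{ is reset on } \tau_i,\\ w_{i-1}^{\gamma} & \text{otherwise.}\end{cases} $$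
   Context: **Automata.** An eNTA (non-deterministic timed automaton with silent transitions) is a tuple $A=(\mathcal{Q},q_0,\Sigma_\epsilon,\mathcal{C},\mathcal{T})$ with the following components. - $\mathcal{Q}$ is a finite set of locations and $q_0\in\mathcal Q$ is the initial location. - $\Sigma$ is a finite set of observable actions, and $\Sigma_\epsilon=\Sigma\cup\{\epsilon\}$, where $\epsilon$ is the silent action. - $\mathcal{C}$ is a finite set of clocks. - $\mathcal{T}$ is a finite set of transitions $(q,a,g,\mathcal{C}_{rst},q')$. Here $q,q'\in\mathcal Q$, $a\in\Sigma_\epsilon$, $\mathcal{C}_{rst}\subseteq\mathcal C$ is the set of clocks reset, and the guard $g$ is a finite conjunction of constraints $c\sim n$ with $c\in\mathcal C$, $\sim\in\{<,\le,=,\ge,>\}$ and $n\in\mathbb{N}_0$. **Valuations and runs.** A valuation is a map $v:\mathcal C\to\mathbb{R}_{\ge0}$. We write $(v+d)(c)=v(c)+d$, and $v[\mathcal C_{rst}]$ for the valuation that sets the clocks in $\mathcal C_{rst}$ to $0$ and leaves the others unchanged. A run is a finite sequence $$(q_0,\mathbf 0)\xrightarrow{d_1}(q_0,\mathbf 0+d_1)\xrightarrow{\tau_1}(q_1,v_1)\xrightarrow{d_2}\cdots\xrightarrow{\tau_k}(q_k,v_k),$$ where $d_i\ge0$, $\tau_i=(q_{i-1},a_i,g_i,\mathcal C_i,q_i)\in\mathcal T$, $v_0=\mathbf 0$, $v_{i-1}+d_i\models g_i$ and $v_i=(v_{i-1}+d_i)[\mathcal C_i]$. The transition $\tau_i$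 is taken at time $t_i=d_1+\cdots+d_i$. **Paths.** A path $\gamma=q_0\tau_1q_1\cdots\tau_nq_n$ is a sequence of transitions with $\tau_i$ going from $q_{i-1}$ to $q_i$. A run along $\gamma$ is a run whose transitions are exactly $\tau_1,\dots,\tau_n$ in this order, and $\gamma$ is reachable if some run along it exists. **Feasible durations $d_i^\gamma$.** Let $l_i^\gamma$ and $u_i^\gamma$ be the lower and upper bounds imposed on $x$ by the guard of $\tau_i$, with $l_i^\gamma=u_i^\gamma$ for an equality constraint, $l_i^\gamma=0$ if there is no lower bound, and $u_i^\gamma=\infty$ if there is no upper bound. 1. Forward adjustment: for $i=1,\dots,n-1$ in increasing order, if $x$ is not reset on $\tau_i$ and $l_{i+1}^\gamma<l_i^\gamma$, set $l_{i+1}^\gamma:=l_i^\gamma$. 2. Backward adjustment: for $i=n-1,\dots,1$ in decreasing order, if $x$ is not reset on $\tau_i$ and $u_i^\gamma>u_{i+1}^\gamma$, set $u_i^\gamma:=u_{i+1}^\gamma$. 3. Define $d_i^\gamma:=\max\{u_i^\gamma-l_i^\gamma,0\}$. **Trail widths $w_i^\gamma$.** The trail of $\gamma$ is the set of all points $(t,x)$ visited by the runs along $\gamma$, where $t$ is the global elapsed time. For $0\le i\le n$, $w_i^\gamma$ is the width of the trail after the $i$-th transition. Concretely, let $j\le i$ be the largest index such that $x$ is reset on $\tau_j$. If such a $j$ exists, $w_i^\gamma:=s_j^\gamma$, the length of the set of times at which $x$ was last reset. If no such $j$ exists (so $x$ was last set to $0$ at time $0$), $w_i^\gamma:=0$.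 *)

theory Defs
  imports Complex_Main "HOL-Library.Extended_Real"
begin

datatype cmp = Lt | Le | Eq | Ge | Gt

text \<open>A clock constraint on the unique clock x: (comparison, constant).
  A guard is a finite conjunction (list) of such constraints.\<close>
type_synonym guard = "(cmp \<times> nat) list"

text \<open>A transition (q, a, g, reset, q'); the action is None for the silent
  action epsilon; since there is a single clock x, the reset set is encoded
  by a boolean (True iff x is reset).\<close>
type_synonym ('q, 'a) trans = "'q \<times> 'a option \<times> guard \<times> bool \<times> 'q"

definition src :: "('q, 'a) trans \<Rightarrow> 'q" where "src t = fst t"
definition act :: "('q, 'a) trans \<Rightarrow> 'a option" where "act t = fst (snd t)"
definition grd :: "('q, 'a) trans \<Rightarrow> guard" where "grd t = fst (snd (snd t))"
definition rst :: "('q, 'a) trans \<Rightarrow> bool" where "rst t = fst (snd (snd (snd t)))"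
definition tgt :: "('q, 'a) trans \<Rightarrow> 'q" where "tgt t = snd (snd (snd (snd t)))"

definition enta :: "'q set \<Rightarrow> 'q \<Rightarrow> 'a set \<Rightarrow> ('q, 'a) trans set \<Rightarrow> bool" where
  "enta Q q0 Sig Tr \<longleftrightarrow> finite Q \<and> q0 \<in> Q \<and> finite Sig \<and> finite Tr \<and>
     (\<forall>t\<in>Tr. src t \<in> Q \<and> tgt t \<in> Q \<and> (act t = None \<or> the (act t) \<in> Sig))"

fun cmp_sat :: "cmp \<Rightarrow> real \<Rightarrow> nat \<Rightarrow> bool" where
  "cmp_sat Lt v n = (v < real n)"
| "cmp_sat Le v n = (v \<le> real n)"
| "cmp_sat Eq v n = (v = real n)"
| "cmp_sat Ge v n = (v \<ge> real n)"
| "cmp_sat Gt v n = (v > real n)"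

definition sat :: "guard \<Rightarrow> real \<Rightarrow> bool" where
  "sat g v \<longleftrightarrow> (\<forall>(c, n) \<in> set g. cmp_sat c v n)"

text \<open>A path from q0 given as its list of transitions tau_1 ... tau_n.\<close>
definition is_path :: "('q, 'a) trans set \<Rightarrow> 'q \<Rightarrow> ('q, 'a) trans list \<Rightarrow> bool" where
  "is_path Tr q0 ts \<longleftrightarrow> set ts \<subseteq> Tr \<and> (ts \<noteq> [] \<longrightarrow> src (ts ! 0) = q0) \<and>
     (\<forall>i. Suc i < length ts \<longrightarrow> tgt (ts ! i) = src (ts ! Suc i))"

text \<open>run_ok v ts ds: starting with clock value v, the delays ds (one per
  transition) give a run taking exactly the transitions ts in order.\<close>
fun run_ok :: "real \<Rightarrow> ('q, 'a) trans list \<Rightarrow> real list \<Rightarrow> bool" where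
  "run_ok v [] [] = True"
| "run_ok v (t # ts) (d # ds) =
     (d \<ge> 0 \<and> sat (grd t) (v + d) \<and> run_ok (if rst t then 0 else v + d) ts ds)"
| "run_ok _ _ _ = False"

definition run_along :: "('q, 'a) trans list \<Rightarrow> real list \<Rightarrow> bool" where
  "run_along ts ds \<longleftrightarrow> run_ok 0 ts ds"

definition reachable_path :: "('q, 'a) trans list \<Rightarrow> bool" where
  "reachable_path ts \<longleftrightarrow> (\<exists>ds. run_along ts ds)"

text \<open>T_i: times at which the i-th transition (1-based) is taken over all runs.\<close>
definition Ttimes :: "('q, 'a) trans list \<Rightarrow> nat \<Rightarrow> real set" where
  "Ttimes ts i = {sum_list (take i ds) | ds. run_along ts ds}"

definition s_len :: "('q, 'a) trans list \<Rightarrow> nat \<Rightarrow> ereal" where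
  "s_len ts i = Sup (ereal ` Ttimes ts i) - Inf (ereal ` Ttimes ts i)"

definition lbound :: "guard \<Rightarrow> real" where
  "lbound g = Max (insert 0 {real n | c n. (c, n) \<in> set g \<and> c \<in> {Eq, Ge, Gt}})"

definition ubound :: "guard \<Rightarrow> ereal" where
  "ubound g = Min (insert \<infinity> {ereal (real n) | c n. (c, n) \<in> set g \<and> c \<in> {Eq, Le, Lt}})"

text \<open>Forward adjustment of the lower bounds (processed in increasing order);
  the argument carries the adjusted bound of the previous transition if x
  was not reset on it.\<close>
fun lower_adj :: "real option \<Rightarrow> ('q, 'a) trans list \<Rightarrow> real list" where
  "lower_adj _ [] = []"
| "lower_adj prev (t # ts) =
     (let l = (case prev of None \<Rightarrow> lbound (grd t) | Some p \<Rightarrow> max (lbound (grd t)) p)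
      in l # lower_adj (if rst t then None else Some l) ts)"

fun upper_adj :: "('q, 'a) trans list \<Rightarrow> ereal list" where
  "upper_adj [] = []"
| "upper_adj (t # ts) =
     (let rest = upper_adj ts
      in (if rst t \<or> ts = [] then ubound (grd t) else min (ubound (grd t)) (hd rest)) # rest)"

text \<open>d_i (1-based).\<close>
definition dur :: "('q, 'a) trans list \<Rightarrow> nat \<Rightarrow> ereal" where
  "dur ts i = max (upper_adj ts ! (i - 1) - ereal (lower_adj None ts ! (i - 1))) 0"

definition width :: "('q, 'a) trans list \<Rightarrow> nat \<Rightarrow> ereal" where
  "width ts i =
     (if \<exists>j\<in>{1..i}. rst (ts ! (j - 1))
      then s_len ts (GREATEST j. j \<in> {1..i} \<and> rst (ts ! (j - 1)))
      else 0)"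

end

theory Submission
  imports Defs
begin


fun endclk :: "real \<Rightarrow> ('q,'a) trans list \<Rightarrow> real list \<Rightarrow> real" where
  "endclk v (t # ts) (d # ds) = endclk (if rst t then 0 else v + d) ts ds"
| "endclk v _ _ = v"

definition ok_at :: "real \<Rightarrow> ('q,'a) trans \<Rightarrow> ('q,'a) trans list \<Rightarrow> real list \<Rightarrow> bool" where
  "ok_at c t ts ds \<longleftrightarrow> sat (grd t) c \<and> run_ok (if rst t then 0 else c) ts ds"

lemma run_ok_Cons': "run_ok v (t # ts) (d # ds) \<longleftrightarrow> d \<ge> 0 \<and> ok_at (v + d) t ts ds"
  by (simp add: ok_at_def)

lemma run_ok_Nil1[simp]: "run_ok v [] ds \<longleftrightarrow> ds = []"
  by (cases ds) auto

lemma run_ok_length: "run_ok v xs ds \<Longrightarrow> length ds = length xs"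
  by (induction v xs ds rule: run_ok.induct) auto

lemma run_ok_append:
  "run_ok v (xs @ ys) ds \<longleftrightarrow> (\<exists>ds1 ds2. ds = ds1 @ ds2 \<and> run_ok v xs ds1 \<and> run_ok (endclk v xs ds1) ys ds2)"
proof (induction xs arbitrary: v ds)
  case Nil then show ?case by auto
next
  case (Cons t xs)
  show ?case
  proof (cases ds)
    case Nil then show ?thesis by auto
  next
    case (Cons d ds')
    show ?thesis
    proof
      assume "run_ok v ((t # xs) @ ys) ds"
      then have h: "d \<ge> 0" "sat (grd t) (v + d)" "run_ok (if rst t then 0 else v + d) (xs @ ys) ds'"
        using Cons by simp_all
      obtain ds1 ds2 where "ds' = ds1 @ ds2" "run_ok (if rst t then 0 else v + d) xs ds1"
          "run_ok (endclk (if rst t then 0 else v + d) xs ds1) ys ds2"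
        using Cons.IH h(3) by blast
      then show "\<exists>ds1 ds2. ds = ds1 @ ds2 \<and> run_ok v (t # xs) ds1 \<and> run_ok (endclk v (t # xs) ds1) ys ds2"
        using h Cons by (intro exI[of _ "d # ds1"] exI[of _ ds2]) simp
    next
      assume "\<exists>ds1 ds2. ds = ds1 @ ds2 \<and> run_ok v (t # xs) ds1 \<and> run_ok (endclk v (t # xs) ds1) ys ds2"
      then obtain ds1 ds2 where h: "ds = ds1 @ ds2" "run_ok v (t # xs) ds1" "run_ok (endclk v (t # xs) ds1) ys ds2"
        by blast
      then obtain e r where er: "ds1 = e # r" by (cases ds1) auto
      let ?w = "if rst t then 0 else v + e"
      have h2: "e \<ge> 0" "sat (grd t) (v + e)" "run_ok ?w xs r" "run_ok (endclk ?w xs r) ys ds2"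
        using h er by simp_all
      have "run_ok ?w (xs @ ys) (r @ ds2)" using Cons.IH h2(3,4) by blast
      then show "run_ok v ((t # xs) @ ys) ds" using h(1) er h2(1,2) by simp
    qed
  qed
qed

lemma endclk_reset: "run_ok v xs ds \<Longrightarrow> xs \<noteq> [] \<Longrightarrow> rst (last xs) \<Longrightarrow> endclk v xs ds = 0"
proof (induction v xs ds rule: endclk.induct)
  case (1 v t ts d ds)
  then show ?case by (cases ts) auto
qed (auto simp: neq_Nil_conv)

lemma endclk_norst: "run_ok v xs ds \<Longrightarrow> \<forall>s\<in>set xs. \<not> rst s \<Longrightarrow>
    endclk v xs ds = v + sum_list ds \<and> (\<forall>d\<in>set ds. d \<ge> 0)"
  by (induction v xs ds rule: endclk.induct) auto

lemma lb_fin: "finite {real n | c n. (c, n) \<in> set g \<and> c \<in> {Eq, Ge, Gt}}"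
  by (rule finite_subset[of _ "(\<lambda>(c,n). real n) ` set g"]) force+

lemma lb_ge: "(c, n) \<in> set g \<Longrightarrow> c \<in> {Eq,Ge,Gt} \<Longrightarrow> real n \<le> lbound g"
  unfolding lbound_def using lb_fin[of g] by (intro Max_ge) auto

lemma lb_nonneg: "0 \<le> lbound g"
  unfolding lbound_def using lb_fin[of g] by (intro Max_ge) auto

lemma lb_le: "sat g a \<Longrightarrow> 0 \<le> a \<Longrightarrow> lbound g \<le> a"
  unfolding lbound_def
proof (subst Max_le_iff)
  assume "sat g a" "0 \<le> a"
  then have "\<forall>(c,n)\<in>set g. cmp_sat c a n" by (simp add: sat_def)
  then show "\<forall>x\<in>insert 0 {real n | c n. (c, n) \<in> set g \<and> c \<in> {Eq, Ge, Gt}}. x \<le> a"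
    using \<open>0 \<le> a\<close> by fastforce
qed (use lb_fin in auto)

lemma ub_fin: "finite {ereal (real n) | c n. (c, n) \<in> set g \<and> c \<in> {Eq, Le, Lt}}"
  by (rule finite_subset[of _ "(\<lambda>(c,n). ereal (real n)) ` set g"]) force+

lemma ub_le: "(c, n) \<in> set g \<Longrightarrow> c \<in> {Eq,Le,Lt} \<Longrightarrow> ubound g \<le> ereal (real n)"
  unfolding ubound_def using ub_fin[of g] by (intro Min_le) auto

lemma ub_ge: "sat g a \<Longrightarrow> ereal a \<le> ubound g"
  unfolding ubound_def
proof (subst Min_ge_iff)
  assume "sat g a"
  then have "\<forall>(c,n)\<in>set g. cmp_sat c a n" by (simp add: sat_def)
  then show "\<forall>x\<in>insert \<infinity> {ereal (real n) | c n. (c, n) \<in> set g \<and> c \<in> {Eq, Le, Lt}}. ereal a \<le> x"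
    by fastforce
qed (use ub_fin in auto)

lemma sat_down: "sat g a \<Longrightarrow> y \<le> a \<Longrightarrow> lbound g < y \<Longrightarrow> sat g y"
  unfolding sat_def
proof clarify
  fix c n assume H: "\<forall>(c, n)\<in>set g. cmp_sat c a n" "y \<le> a" "lbound g < y" and cn: "(c,n) \<in> set g"
  then have "cmp_sat c a n" by auto
  then show "cmp_sat c y n" using lb_ge[OF cn] H by (cases c) auto
qed

lemma sat_up: "sat g a \<Longrightarrow> a \<le> y \<Longrightarrow> ereal y < ubound g \<Longrightarrow> sat g y"
  unfolding sat_def
proof clarify
  fix c n assume H: "\<forall>(c, n)\<in>set g. cmp_sat c a n" "a \<le> y" "ereal y < ubound g" and cn: "(c,n) \<in> set g"
  then have "cmp_sat c a n" by auto
  moreover have "c \<in> {Eq,Le,Lt} \<Longrightarrow> y < real n"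
  proof -
    assume "c \<in> {Eq,Le,Lt}"
    then have "ubound g \<le> ereal (real n)" by (rule ub_le[OF cn])
    then have "ereal y < ereal (real n)" using H(3) by (metis less_le_trans)
    then show "y < real n" by simp
  qed
  ultimately show "cmp_sat c y n" using H by (cases c) auto
qed




lemma upper_ok: "ok_at c t post ds \<Longrightarrow> ereal c \<le> hd (upper_adj (t # post))"
proof (induction post arbitrary: t c ds)
  case Nil then show ?case by (simp add: ok_at_def ub_ge Let_def)
next
  case (Cons t2 p)
  show ?case
  proof (cases "rst t")
    case True then show ?thesis using Cons.prems by (simp add: ok_at_def ub_ge Let_def)
  next
    case False
    obtain e r where ds: "ds = e # r" using Cons.prems by (cases ds) (auto simp: ok_at_def)
    have h: "sat (grd t) c" "e \<ge> 0" "ok_at (c + e) t2 p r"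
      using Cons.prems False ds by (auto simp: ok_at_def run_ok_Cons')
    have "ereal (c+e) \<le> hd (upper_adj (t2 # p))" using Cons.IH h(3) by blast
    moreover have "ereal c \<le> ereal (c + e)" using h(2) by simp
    moreover have hd: "hd (upper_adj (t # t2 # p)) = min (ubound (grd t)) (hd (upper_adj (t2 # p)))"
      using False by (simp add: Let_def)
    ultimately show ?thesis using ub_ge[OF h(1)] by (metis hd min.boundedI order_trans)
  qed
qed

lemma upper_mod: "ok_at c t post ds \<Longrightarrow> c \<le> y \<Longrightarrow> ereal y < hd (upper_adj (t # post)) \<Longrightarrow>
  \<exists>ds'. ok_at y t post ds'"
proof (induction post arbitrary: t c y ds)
  case Nil then show ?case by (auto simp: ok_at_def Let_def intro: sat_up)
next
  case (Cons t2 p)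
  show ?case
  proof (cases "rst t")
    case True then show ?thesis using Cons.prems by (auto simp: ok_at_def Let_def intro: sat_up)
  next
    case False
    obtain e r where ds: "ds = e # r" using Cons.prems by (cases ds) (auto simp: ok_at_def)
    have h: "sat (grd t) c" "e \<ge> 0" "ok_at (c + e) t2 p r"
      using Cons.prems False ds by (auto simp: ok_at_def run_ok_Cons')
    have hd: "hd (upper_adj (t # t2 # p)) = min (ubound (grd t)) (hd (upper_adj (t2 # p)))"
      using False by (simp add: Let_def)
    have sy: "sat (grd t) y" using sat_up[OF h(1) Cons.prems(2)] Cons.prems(3) hd by simp
    show ?thesis
    proof (cases "y \<le> c + e")
      case True
      have "ok_at y t (t2 # p) ((c + e - y) # r)"
        using sy True h(3) False by (auto simp: ok_at_def run_ok_Cons' split: if_splits)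
      then show ?thesis by blast
    next
      case F2: False
      obtain ds'' where "ok_at y t2 p ds''"
        using Cons.IH[OF h(3), of y] F2 Cons.prems(3) hd by auto
      then have "ok_at y t (t2 # p) (0 # ds'')"
        using sy False by (auto simp: ok_at_def run_ok_Cons' split: if_splits)
      then show ?thesis by blast
    qed
  qed
qed

lemma ok_at_down: "ok_at c t post ds \<Longrightarrow> y \<le> c \<Longrightarrow> lbound (grd t) < y \<Longrightarrow> \<exists>ds'. ok_at y t post ds'"
proof (cases "rst t")
  case True
  assume "ok_at c t post ds" "y \<le> c" "lbound (grd t) < y"
  then show ?thesis using True by (auto simp: ok_at_def intro: sat_down)
next
  case False
  assume H: "ok_at c t post ds" "y \<le> c" "lbound (grd t) < y"
  have sy: "sat (grd t) y" using H by (auto simp: ok_at_def intro: sat_down)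
  show ?thesis
  proof (cases post)
    case Nil then show ?thesis using H sy by (auto simp: ok_at_def)
  next
    case (Cons t2 p)
    obtain e r where ds: "ds = e # r" using H Cons by (cases ds) (auto simp: ok_at_def)
    have h: "e \<ge> 0" "ok_at (c + e) t2 p r"
      using H False ds Cons by (auto simp: ok_at_def run_ok_Cons')
    have "ok_at y t post ((e + c - y) # r)"
      using sy h H(2) False Cons by (auto simp: ok_at_def run_ok_Cons' add.commute split: if_splits)
    then show ?thesis by blast
  qed
qed

lemma zeros: "run_ok c xs ds \<Longrightarrow> \<forall>s\<in>set xs. \<not> rst s \<Longrightarrow> y \<le> c \<Longrightarrow> \<forall>s\<in>set xs. lbound (grd s) < y
   \<Longrightarrow> run_ok y xs (replicate (length xs) 0) \<and> endclk y xs (replicate (length xs) 0) = y"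
proof (induction xs arbitrary: c ds)
  case Nil then show ?case by simp
next
  case (Cons s xs)
  obtain d r where ds: "ds = d # r" using Cons.prems by (cases ds) auto
  have h: "d \<ge> 0" "sat (grd s) (c + d)" "run_ok (c + d) xs r" using Cons.prems ds by auto
  have "sat (grd s) y" using sat_down[OF h(2)] Cons.prems h(1) by auto
  then show ?case using Cons.IH[OF h(3)] Cons.prems h by auto
qed

lemma pre_mod: "run_ok v xs ds \<Longrightarrow> \<forall>s\<in>set xs. \<not> rst s \<Longrightarrow> v \<le> y \<Longrightarrow> y \<le> endclk v xs ds \<Longrightarrow>
   \<forall>s\<in>set xs. lbound (grd s) < y \<Longrightarrow> \<exists>ds'. run_ok v xs ds' \<and> endclk v xs ds' = y"
proof (induction xs arbitrary: v ds)
  case Nil then show ?case by auto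
next
  case (Cons s xs)
  obtain d r where ds: "ds = d # r" using Cons.prems by (cases ds) auto
  have h: "d \<ge> 0" "sat (grd s) (v + d)" "run_ok (v + d) xs r" using Cons.prems ds by auto
  show ?case
  proof (cases "v + d \<le> y")
    case True
    obtain ds' where "run_ok (v + d) xs ds'" "endclk (v + d) xs ds' = y"
      using Cons.IH[OF h(3)] True Cons.prems ds by auto
    then show ?thesis using h Cons.prems by (intro exI[of _ "d # ds'"]) auto
  next
    case False
    have z: "run_ok y xs (replicate (length xs) 0) \<and> endclk y xs (replicate (length xs) 0) = y"
      using zeros[OF h(3)] False Cons.prems by auto
    have "sat (grd s) y" using sat_down[OF h(2)] False Cons.prems by auto
    then show ?thesis using z Cons.prems
      by (intro exI[of _ "(y - v) # replicate (length xs) 0"]) auto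
  qed
qed

lemma pre_lb: "run_ok v xs ds \<Longrightarrow> \<forall>s\<in>set xs. \<not> rst s \<Longrightarrow> 0 \<le> v \<Longrightarrow>
   \<forall>s\<in>set xs. lbound (grd s) \<le> endclk v xs ds"
proof (induction xs arbitrary: v ds)
  case Nil then show ?case by auto
next
  case (Cons s xs)
  obtain d r where ds: "ds = d # r" using Cons.prems by (cases ds) auto
  have h: "d \<ge> 0" "sat (grd s) (v + d)" "run_ok (v + d) xs r" using Cons.prems ds by auto
  have e: "endclk (v + d) xs r = v + d + sum_list r" "\<forall>x\<in>set r. x \<ge> 0"
    using endclk_norst[OF h(3)] Cons.prems by auto
  have "sum_list r \<ge> 0" using e(2) by (simp add: sum_list_nonneg)
  then have "lbound (grd s) \<le> endclk (v + d) xs r" using lb_le[OF h(2)] h(1) Cons.prems e(1) by auto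
  then show ?case using Cons.IH[OF h(3)] Cons.prems ds h by auto
qed

definition lval :: "real option \<Rightarrow> ('q,'a) trans \<Rightarrow> real" where
  "lval p t = (case p of None \<Rightarrow> lbound (grd t) | Some q \<Rightarrow> max (lbound (grd t)) q)"

fun lst :: "real option \<Rightarrow> ('q,'a) trans list \<Rightarrow> real option" where
  "lst p [] = p"
| "lst p (t # ts) = lst (if rst t then None else Some (lval p t)) ts"

lemma lower_adj_Cons': "lower_adj p (t # ts) = lval p t # lower_adj (if rst t then None else Some (lval p t)) ts"
  by (simp add: lval_def Let_def)

lemma lower_adj_append: "lower_adj p (xs @ ys) = lower_adj p xs @ lower_adj (lst p xs) ys"
  by (induction xs arbitrary: p) (simp_all add: lower_adj_Cons' del: lower_adj.simps(2))

lemma length_lower_adj[simp]: "length (lower_adj p ts) = length ts"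
  by (induction ts arbitrary: p) (simp_all add: Let_def)

lemma length_upper_adj[simp]: "length (upper_adj ts) = length ts"
  by (induction ts) (simp_all add: Let_def)

lemma drop_upper_adj: "drop k (upper_adj ts) = upper_adj (drop k ts)"
proof (induction ts arbitrary: k)
  case Nil then show ?case by simp
next
  case (Cons t ts) then show ?case by (cases k) (simp_all add: Let_def)
qed

lemma lval_ub: "\<forall>s\<in>set xs. \<not> rst s \<Longrightarrow> (\<forall>q. p = Some q \<longrightarrow> q \<le> a) \<Longrightarrow>
  \<forall>s\<in>set (xs @ [t]). lbound (grd s) \<le> a \<Longrightarrow> lval (lst p xs) t \<le> a"
proof (induction xs arbitrary: p)
  case Nil then show ?case by (cases p) (auto simp: lval_def)
next
  case (Cons s xs)
  have "lval p s \<le> a" using Cons.prems by (cases p) (auto simp: lval_def)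
  then show ?case using Cons.IH[of "Some (lval p s)"] Cons.prems by auto
qed

lemma lval_lb: "\<forall>s\<in>set xs. \<not> rst s \<Longrightarrow>
  (\<forall>s\<in>set (xs @ [t]). lbound (grd s) \<le> lval (lst p xs) t) \<and> (\<forall>q. p = Some q \<longrightarrow> q \<le> lval (lst p xs) t)"
proof (induction xs arbitrary: p)
  case Nil then show ?case by (cases p) (auto simp: lval_def)
next
  case (Cons s xs)
  have "lbound (grd s) \<le> lval p s" "\<forall>q. p = Some q \<longrightarrow> q \<le> lval p s" by (cases p; auto simp: lval_def)+
  then show ?case using Cons.IH[of "Some (lval p s)"] Cons.prems by fastforce
qed




lemma seg_char:
  assumes "\<forall>s\<in>set pre. \<not> rst s"
  shows "{sum_list (take (Suc (length pre)) ds) | ds. run_ok 0 (pre @ t # post) ds} =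
     {c. \<exists>ds1 ds2. run_ok 0 pre ds1 \<and> endclk 0 pre ds1 \<le> c \<and> ok_at c t post ds2}"
proof (intro equalityI subsetI)
  fix x assume "x \<in> {sum_list (take (Suc (length pre)) ds) | ds. run_ok 0 (pre @ t # post) ds}"
  then obtain ds where x: "x = sum_list (take (Suc (length pre)) ds)" and r: "run_ok 0 (pre @ t # post) ds"
    by blast
  obtain ds1 ds2' where d: "ds = ds1 @ ds2'" "run_ok 0 pre ds1" "run_ok (endclk 0 pre ds1) (t # post) ds2'"
    using r run_ok_append by blast
  obtain d ds2 where d2: "ds2' = d # ds2" using d(3) by (cases ds2') auto
  have l: "length ds1 = length pre" using run_ok_length[OF d(2)] .
  have e: "endclk 0 pre ds1 = sum_list ds1" using endclk_norst[OF d(2) assms] by simp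
  have "x = endclk 0 pre ds1 + d" using x d(1) d2 l e by simp
  moreover have "d \<ge> 0" "ok_at (endclk 0 pre ds1 + d) t post ds2" using d(3) d2 by (auto simp: ok_at_def)
  ultimately show "x \<in> {c. \<exists>ds1 ds2. run_ok 0 pre ds1 \<and> endclk 0 pre ds1 \<le> c \<and> ok_at c t post ds2}"
    using d(2) by auto
next
  fix x assume "x \<in> {c. \<exists>ds1 ds2. run_ok 0 pre ds1 \<and> endclk 0 pre ds1 \<le> c \<and> ok_at c t post ds2}"
  then obtain ds1 ds2 where h: "run_ok 0 pre ds1" "endclk 0 pre ds1 \<le> x" "ok_at x t post ds2" by blast
  have l: "length ds1 = length pre" using run_ok_length[OF h(1)] .
  have e: "endclk 0 pre ds1 = sum_list ds1" using endclk_norst[OF h(1) assms] by simp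
  have "run_ok (endclk 0 pre ds1) (t # post) ((x - endclk 0 pre ds1) # ds2)"
    using h by (auto simp: ok_at_def split: if_splits)
  then have "run_ok 0 (pre @ t # post) (ds1 @ (x - endclk 0 pre ds1) # ds2)"
    using h(1) run_ok_append by blast
  moreover have "x = sum_list (take (Suc (length pre)) (ds1 @ (x - endclk 0 pre ds1) # ds2))"
    using l e by simp
  ultimately show "x \<in> {sum_list (take (Suc (length pre)) ds) | ds. run_ok 0 (pre @ t # post) ds}"
    by blast
qed

lemma sup_char:
  fixes B :: "real set"
  assumes "c0 \<in> B" "\<forall>c\<in>B. ereal c \<le> U" "\<forall>y. c0 \<le> y \<longrightarrow> ereal y < U \<longrightarrow> y \<in> B"
  shows "Sup (ereal ` B) = U"
proof (rule Sup_eqI)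
  show "\<And>y. y \<in> ereal ` B \<Longrightarrow> y \<le> U" using assms(2) by auto
next
  fix z assume ub: "\<And>y. y \<in> ereal ` B \<Longrightarrow> y \<le> z"
  show "U \<le> z"
  proof (rule ccontr)
    assume "\<not> U \<le> z"
    then have "z < U" by simp
    then obtain r where r: "z < ereal r" "ereal r < U" using ereal_dense2 by blast
    have "ereal c0 \<le> z" using ub assms(1) by auto
    then have "ereal c0 < ereal r" using r(1) by (rule le_less_trans)
    then have "c0 \<le> r" by simp
    then have "r \<in> B" using assms(3) r(2) by blast
    then have "ereal r \<le> z" using ub by blast
    then show False using r(1) by simp
  qed
qed

lemma inf_char:
  fixes B :: "real set"
  assumes "c0 \<in> B" "\<forall>c\<in>B. L \<le> c" "\<forall>y. L < y \<longrightarrow> y \<le> c0 \<longrightarrow> y \<in> B"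
  shows "Inf (ereal ` B) = ereal L"
proof (rule Inf_eqI)
  show "\<And>y. y \<in> ereal ` B \<Longrightarrow> ereal L \<le> y" using assms(2) by auto
next
  fix z assume lb: "\<And>y. y \<in> ereal ` B \<Longrightarrow> z \<le> y"
  show "z \<le> ereal L"
  proof (rule ccontr)
    assume "\<not> z \<le> ereal L"
    then have "ereal L < z" by simp
    then obtain r where r: "ereal L < ereal r" "ereal r < z" using ereal_dense2 by blast
    have "z \<le> ereal c0" using lb assms(1) by auto
    then have "ereal r < ereal c0" using r(2) by (rule less_le_trans[rotated])
    then have "r \<le> c0" by simp
    then have "r \<in> B" using assms(3) r(1) by simp
    then have "z \<le> ereal r" using lb by blast
    then show False using r(2) by simp
  qed
qed

lemma sumset_img: "ereal ` {a + b | a b. a \<in> A \<and> b \<in> B} = (\<Union>a\<in>A. (\<lambda>b. ereal a + ereal b) ` B)"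
  by auto

lemma INF_UNION': "(INF x\<in>(\<Union>y\<in>A. g y). f x) = (INF y\<in>A. INF x\<in>g y. f x :: _ :: complete_lattice)"
  by (rule order_antisym) (blast intro: INF_greatest INF_lower2)+

lemma sup_sum:
  fixes A B :: "real set"
  assumes "A \<noteq> {}" "B \<noteq> {}"
  shows "Sup (ereal ` {a + b | a b. a \<in> A \<and> b \<in> B}) = Sup (ereal ` A) + Sup (ereal ` B)"
proof -
  have "Sup (ereal ` {a + b | a b. a \<in> A \<and> b \<in> B}) = (SUP a\<in>A. SUP b\<in>B. ereal a + ereal b)"
    using SUP_UNION[where f="\<lambda>x. x" and A=A and g="\<lambda>a. (\<lambda>b. ereal a + ereal b) ` B"]
    by (simp add: sumset_img image_image)
  also have "\<dots> = (SUP a\<in>A. ereal a + Sup (ereal ` B))"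
  proof -
    have eq: "\<And>a. (SUP b\<in>B. ereal a + ereal b) = ereal a + Sup (ereal ` B)"
      by (rule SUP_ereal_add_right[OF assms(2)]) simp
    show ?thesis by (simp only: eq)
  qed
  also have "\<dots> = Sup (ereal ` A) + Sup (ereal ` B)"
  proof -
    obtain b where "b \<in> B" using assms(2) by blast
    then have "ereal b \<le> Sup (ereal ` B)" by (intro Sup_upper) simp
    then have "Sup (ereal ` B) \<noteq> -\<infinity>" by auto
    then show ?thesis using SUP_ereal_add_left[OF assms(1)] by (simp add: image_image)
  qed
  finally show ?thesis .
qed

lemma inf_sum:
  fixes A B :: "real set"
  assumes "A \<noteq> {}" "B \<noteq> {}" "\<forall>a\<in>A. 0 \<le> a" "\<forall>b\<in>B. 0 \<le> b"
  shows "Inf (ereal ` {a + b | a b. a \<in> A \<and> b \<in> B}) = Inf (ereal ` A) + Inf (ereal ` B)"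
proof -
  have "Inf (ereal ` {a + b | a b. a \<in> A \<and> b \<in> B}) = (INF a\<in>A. INF b\<in>B. ereal a + ereal b)"
    using INF_UNION'[where f="\<lambda>x. x" and A=A and g="\<lambda>a. (\<lambda>b. ereal a + ereal b) ` B"]
    by (simp add: sumset_img image_image)
  also have "\<dots> = (INF a\<in>A. ereal a + Inf (ereal ` B))"
  proof -
    have eq: "\<And>a. (INF b\<in>B. ereal a + ereal b) = ereal a + Inf (ereal ` B)"
      by (rule INF_ereal_add_right[OF assms(2)]) (use assms(4) in simp_all)
    show ?thesis by (simp only: eq)
  qed
  also have "\<dots> = Inf (ereal ` A) + Inf (ereal ` B)"
  proof -
    have "0 \<le> Inf (ereal ` B)" using assms(4) by (intro Inf_greatest) auto
    then have "Inf (ereal ` B) \<noteq> -\<infinity>" by auto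
    then show ?thesis using INF_ereal_add_left[OF assms(1)] assms(3) by (simp add: image_image)
  qed
  finally show ?thesis .
qed




lemma seg_result:
  assumes np: "\<forall>s\<in>set pre. \<not> rst s" and ex: "\<exists>ds. run_ok 0 (pre @ t # post) ds"
  defines "B \<equiv> {sum_list (take (Suc (length pre)) ds) | ds. run_ok 0 (pre @ t # post) ds}"
  shows "B \<noteq> {}" "\<forall>b\<in>B. 0 \<le> b" "Sup (ereal ` B) = hd (upper_adj (t # post))"
    "Inf (ereal ` B) = ereal (lval (lst None pre) t)"
proof -
  have BC: "B = {c. \<exists>ds1 ds2. run_ok 0 pre ds1 \<and> endclk 0 pre ds1 \<le> c \<and> ok_at c t post ds2}"
    unfolding B_def by (rule seg_char[OF np])
  have enn: "\<And>ds1. run_ok 0 pre ds1 \<Longrightarrow> 0 \<le> endclk 0 pre ds1"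
    using endclk_norst np by (metis add_0 sum_list_nonneg)
  show ne: "B \<noteq> {}" using ex unfolding B_def by blast
  then obtain c0 where c0: "c0 \<in> B" by blast
  show nn: "\<forall>b\<in>B. 0 \<le> b" unfolding BC using enn by (fastforce intro: order_trans)
  show "Sup (ereal ` B) = hd (upper_adj (t # post))"
  proof (rule sup_char[OF c0])
    show "\<forall>c\<in>B. ereal c \<le> hd (upper_adj (t # post))" unfolding BC using upper_ok by blast
    show "\<forall>y. c0 \<le> y \<longrightarrow> ereal y < hd (upper_adj (t # post)) \<longrightarrow> y \<in> B"
    proof (intro allI impI)
      fix y assume y: "c0 \<le> y" "ereal y < hd (upper_adj (t # post))"
      obtain ds1 ds2 where h: "run_ok 0 pre ds1" "endclk 0 pre ds1 \<le> c0" "ok_at c0 t post ds2"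
        using c0 unfolding BC by blast
      obtain ds' where "ok_at y t post ds'" using upper_mod[OF h(3) y(1) y(2)] by blast
      then show "y \<in> B" unfolding BC using h y by (auto intro: order_trans)
    qed
  qed
  let ?L = "lval (lst None pre) t"
  show "Inf (ereal ` B) = ereal ?L"
  proof (rule inf_char[OF c0])
    show "\<forall>c\<in>B. ?L \<le> c"
    proof
      fix c assume "c \<in> B"
      then obtain ds1 ds2 where h: "run_ok 0 pre ds1" "endclk 0 pre ds1 \<le> c" "ok_at c t post ds2"
        unfolding BC by blast
      have c0': "0 \<le> c" using enn[OF h(1)] h(2) by simp
      have "\<forall>s\<in>set pre. lbound (grd s) \<le> c" using pre_lb[OF h(1) np] h(2) by force
      moreover have "lbound (grd t) \<le> c" using lb_le h(3) c0' by (auto simp: ok_at_def)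
      ultimately show "?L \<le> c" by (intro lval_ub[OF np]) auto
    qed
    show "\<forall>y. ?L < y \<longrightarrow> y \<le> c0 \<longrightarrow> y \<in> B"
    proof (intro allI impI)
      fix y assume y: "?L < y" "y \<le> c0"
      obtain ds1 ds2 where h: "run_ok 0 pre ds1" "endclk 0 pre ds1 \<le> c0" "ok_at c0 t post ds2"
        using c0 unfolding BC by blast
      have lbs: "\<forall>s\<in>set (pre @ [t]). lbound (grd s) < y"
        using lval_lb[OF np, of t None] y(1) by force
      obtain ds' where d': "ok_at y t post ds'" using ok_at_down[OF h(3) y(2)] lbs by auto
      show "y \<in> B"
      proof (cases "endclk 0 pre ds1 \<le> y")
        case True then show ?thesis unfolding BC using h d' by blast
      next
        case False
        have "0 \<le> lbound (grd t)" by (rule lb_nonneg)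
        then have "0 \<le> y" using lbs by force
        then obtain ds1' where "run_ok 0 pre ds1'" "endclk 0 pre ds1' = y"
          using pre_mod[OF h(1) np] False lbs by force
        then show ?thesis unfolding BC using d' by force
      qed
    qed
  qed
qed

lemma lst_reset: "xs \<noteq> [] \<Longrightarrow> rst (last xs) \<Longrightarrow> lst p xs = None"
proof (induction xs arbitrary: p)
  case (Cons a xs) then show ?case by (cases xs) auto
qed simp

lemma ereal_alg:
  fixes SA SB :: ereal
  assumes "ereal ia \<le> SA" "ereal ib \<le> SB"
  shows "(SA + SB) - (ereal ia + ereal ib) = (SA - ereal ia) + max (SB - ereal ib) 0"
  using assms by (cases SA; cases SB) (auto simp: max_def)




lemma run_ok_nonneg: "run_ok v xs ds \<Longrightarrow> \<forall>d\<in>set ds. 0 \<le> d"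
  by (induction v xs ds rule: run_ok.induct) auto

theorem proposition1:
  fixes Q :: "'q set" and q0 :: 'q and Sig :: "'a set"
    and Tr :: "('q, 'a) trans set" and ts :: "('q, 'a) trans list"
  assumes "enta Q q0 Sig Tr"
    and "is_path Tr q0 ts"
    and "reachable_path ts"
  shows "(\<forall>i\<in>{1..length ts}. s_len ts i = width ts (i - 1) + dur ts i) \<and>
         (\<forall>i\<in>{0..length ts}. width ts i =
            (if i = 0 then 0
             else if rst (ts ! (i - 1)) then s_len ts i
             else width ts (i - 1)))"
proof (intro conjI ballI)
  fix i assume "i \<in> {0..length ts}"
  show "width ts i = (if i = 0 then 0 else if rst (ts ! (i - 1)) then s_len ts i else width ts (i - 1))"
  proof (cases "i = 0")
    case True then show ?thesis by (simp add: width_def)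
  next
    case F: False
    show ?thesis
    proof (cases "rst (ts ! (i - 1))")
      case True
      have g: "(GREATEST j. j \<in> {1..i} \<and> rst (ts ! (j - 1))) = i"
        using True F by (intro Greatest_equality) auto
      have "\<exists>j\<in>{1..i}. rst (ts ! (j - 1))" using True F by (intro bexI[of _ i]) auto
      then show ?thesis using True F g unfolding width_def by simp
    next
      case False
      have eq: "(\<lambda>j. j \<in> {1..i} \<and> rst (ts ! (j - 1))) = (\<lambda>j. j \<in> {1..i-1} \<and> rst (ts ! (j - 1)))"
      proof (rule ext)
        fix j show "(j \<in> {1..i} \<and> rst (ts ! (j - 1))) = (j \<in> {1..i-1} \<and> rst (ts ! (j - 1)))"
          using False F by (cases "j = i") auto
      qed
      have eq2: "(\<exists>j\<in>{1..i}. rst (ts ! (j - 1))) = (\<exists>j\<in>{1..i-1}. rst (ts ! (j - 1)))"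
        using eq unfolding Bex_def by (simp add: fun_eq_iff)
      show ?thesis using False F unfolding width_def eq eq2 by simp
    qed
  qed
next
  fix i assume i: "i \<in> {1..length ts}"
  define P where "P = (\<lambda>j. j \<in> {1..i-1} \<and> rst (ts ! (j - 1)))"
  define m where "m = (if \<exists>j. P j then (GREATEST j. P j) else 0)"
  have PG: "\<exists>j. P j \<Longrightarrow> P (GREATEST j. P j)"
  proof -
    assume "\<exists>j. P j"
    then obtain j where "P j" by blast
    then show "P (GREATEST j. P j)" by (rule GreatestI_nat[where b = "i-1"]) (simp add: P_def)
  qed
  have mle: "m \<le> i - 1"
    using PG unfolding m_def by (auto simp: P_def)
  have mrst: "0 < m \<Longrightarrow> rst (ts ! (m - 1))"
    using PG unfolding m_def by (auto simp: P_def split: if_splits)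
  have mnot: "\<And>j. m < j \<Longrightarrow> j \<le> i - 1 \<Longrightarrow> \<not> rst (ts ! (j - 1))"
  proof
    fix j assume j: "m < j" "j \<le> i - 1" "rst (ts ! (j - 1))"
    then have "P j" unfolding P_def by simp
    then have "j \<le> (GREATEST j. P j)" by (rule Greatest_le_nat[where b = "i-1"]) (simp add: P_def)
    moreover have "m = (GREATEST j. P j)" using \<open>P j\<close> unfolding m_def by auto
    ultimately show False using j by linarith
  qed
  have wid0: "width ts (i - 1) = (if \<exists>j. P j then s_len ts (Greatest P) else 0)"
    unfolding width_def P_def Bex_def by (rule refl)
  have wid: "width ts (i - 1) = (if 0 < m then s_len ts m else 0)"
  proof (cases "\<exists>j. P j")
    case True
    then have "0 < m" using PG unfolding m_def by (auto simp: P_def)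
    then show ?thesis using True wid0 unfolding m_def by simp
  next
    case False
    then have "m = 0" unfolding m_def by (rule if_not_P)
    then show ?thesis using wid0 False by simp
  qed
  define ts1 where "ts1 = take m ts"
  define ts2 where "ts2 = drop m ts"
  define pre where "pre = take (i - 1 - m) ts2"
  define t where "t = ts ! (i - 1)"
  define post where "post = drop i ts"
  have i1: "1 \<le> i" "i \<le> length ts" using i by auto
  have ts: "ts = ts1 @ ts2" unfolding ts1_def ts2_def by simp
  have lts1: "length ts1 = m" unfolding ts1_def using mle i1 by simp
  have dt: "drop (i - 1) ts = t # post"
  proof -
    have "i - 1 < length ts" using i1 by simp
    then have "drop (i - 1) ts = ts ! (i - 1) # drop (Suc (i - 1)) ts" by (rule Cons_nth_drop_Suc[symmetric])
    moreover have "Suc (i - 1) = i" using i1 by simp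
    ultimately show ?thesis unfolding t_def post_def by simp
  qed
  have ts2: "ts2 = pre @ t # post"
  proof -
    have "drop (i - 1 - m) ts2 = t # post"
    proof -
      have "i - 1 - m + m = i - 1" using mle by simp
      then show ?thesis unfolding ts2_def using dt by simp
    qed
    moreover have "ts2 = take (i - 1 - m) ts2 @ drop (i - 1 - m) ts2" by simp
    ultimately show ?thesis unfolding pre_def by simp
  qed
  have lpre: "length pre = i - 1 - m" unfolding pre_def ts2_def using mle i1 by simp
  have np: "\<forall>s\<in>set pre. \<not> rst s"
  proof
    fix s assume "s \<in> set pre"
    then obtain k where k: "k < length pre" "s = pre ! k" by (metis in_set_conv_nth)
    have "s = ts ! (m + k)" using k lpre mle i1 unfolding pre_def ts2_def by simp
    moreover have "\<not> rst (ts ! (m + k + 1 - 1))" using mnot[of "m + k + 1"] k lpre by simp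
    ultimately show "\<not> rst s" by simp
  qed
  have lastts1: "0 < m \<Longrightarrow> ts1 \<noteq> [] \<and> rst (last ts1)"
  proof -
    assume m0: "0 < m"
    have ne: "ts1 \<noteq> []" using m0 lts1 by auto
    then have "last ts1 = ts1 ! (length ts1 - 1)" by (rule last_conv_nth)
    also have "\<dots> = ts ! (m - 1)" using lts1 m0 unfolding ts1_def by simp
    finally have "last ts1 = ts ! (m - 1)" .
    then show ?thesis using mrst m0 lts1 by auto
  qed
  have end0: "\<And>ds1. run_ok 0 ts1 ds1 \<Longrightarrow> endclk 0 ts1 ds1 = 0"
  proof -
    fix ds1 assume r: "run_ok 0 ts1 ds1"
    show "endclk 0 ts1 ds1 = 0"
    proof (cases "m = 0")
      case True then show ?thesis using r lts1 by simp
    next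
      case False
      then show ?thesis using endclk_reset[OF r] lastts1 by auto
    qed
  qed
  have runs: "\<And>ds. run_ok 0 ts ds \<longleftrightarrow> (\<exists>ds1 ds2. ds = ds1 @ ds2 \<and> run_ok 0 ts1 ds1 \<and> run_ok 0 ts2 ds2)"
  proof
    fix ds assume "run_ok 0 ts ds"
    then have "run_ok 0 (ts1 @ ts2) ds" using ts by simp
    then obtain ds1 ds2 where "ds = ds1 @ ds2" "run_ok 0 ts1 ds1" "run_ok (endclk 0 ts1 ds1) ts2 ds2"
      unfolding run_ok_append by blast
    then show "\<exists>ds1 ds2. ds = ds1 @ ds2 \<and> run_ok 0 ts1 ds1 \<and> run_ok 0 ts2 ds2" using end0 by auto
  next
    fix ds assume "\<exists>ds1 ds2. ds = ds1 @ ds2 \<and> run_ok 0 ts1 ds1 \<and> run_ok 0 ts2 ds2"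
    then obtain ds1 ds2 where h: "ds = ds1 @ ds2" "run_ok 0 ts1 ds1" "run_ok 0 ts2 ds2" by blast
    then have "run_ok (endclk 0 ts1 ds1) ts2 ds2" using end0 by simp
    then have "run_ok 0 (ts1 @ ts2) ds" unfolding run_ok_append using h by blast
    then show "run_ok 0 ts ds" using ts by simp
  qed
  obtain ds0 where ds0: "run_ok 0 ts ds0" using assms(3) unfolding reachable_path_def run_along_def by blast
  then obtain d01 d02 where d0: "run_ok 0 ts1 d01" "run_ok 0 ts2 d02" using runs by blast
  define A where "A = sum_list ` {ds1. run_ok 0 ts1 ds1}"
  define B where "B = {sum_list (take (Suc (length pre)) ds) | ds. run_ok 0 (pre @ t # post) ds}"
  have sres: "B \<noteq> {}" "\<forall>b\<in>B. 0 \<le> b" "Sup (ereal ` B) = hd (upper_adj (t # post))"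
    "Inf (ereal ` B) = ereal (lval (lst None pre) t)"
    using seg_result[OF np] d0(2) unfolding B_def ts2 by blast+
  have Ane: "A \<noteq> {}" using d0 unfolding A_def by blast
  have Ann: "\<forall>a\<in>A. 0 \<le> a"
  proof
    fix a assume "a \<in> A"
    then obtain ds1 where "run_ok 0 ts1 ds1" "a = sum_list ds1" unfolding A_def by blast
    then show "0 \<le> a" using run_ok_nonneg[of 0 ts1 ds1] by (simp add: sum_list_nonneg)
  qed
  have lpre2: "Suc (length pre) = i - m" using lpre mle i1 by simp
  have takeeq: "\<And>ds1 ds2. length ds1 = m \<Longrightarrow> take i (ds1 @ ds2) = ds1 @ take (Suc (length pre)) ds2"
    using lpre2 mle i1 by simp
  have TT: "Ttimes ts i = {a + b | a b. a \<in> A \<and> b \<in> B}"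
  proof (intro equalityI subsetI)
    fix x assume "x \<in> Ttimes ts i"
    then obtain ds where x: "x = sum_list (take i ds)" "run_ok 0 ts ds"
      unfolding Ttimes_def run_along_def by blast
    then obtain ds1 ds2 where d: "ds = ds1 @ ds2" "run_ok 0 ts1 ds1" "run_ok 0 ts2 ds2" using runs by blast
    have "length ds1 = m" using run_ok_length[OF d(2)] lts1 by simp
    then have "take i ds = ds1 @ take (Suc (length pre)) ds2" unfolding d(1) by (rule takeeq)
    then have "x = sum_list ds1 + sum_list (take (Suc (length pre)) ds2)" using x(1) by simp
    moreover have "sum_list ds1 \<in> A" using d(2) unfolding A_def by blast
    moreover have "sum_list (take (Suc (length pre)) ds2) \<in> B" using d(3) unfolding B_def ts2 by blast
    ultimately show "x \<in> {a + b | a b. a \<in> A \<and> b \<in> B}" by blast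
  next
    fix x assume "x \<in> {a + b | a b. a \<in> A \<and> b \<in> B}"
    then obtain ds1 ds2 where d: "run_ok 0 ts1 ds1" "run_ok 0 ts2 ds2"
        "x = sum_list ds1 + sum_list (take (Suc (length pre)) ds2)"
      unfolding A_def B_def ts2[symmetric] by blast
    have "length ds1 = m" using run_ok_length[OF d(1)] lts1 by simp
    then have "take i (ds1 @ ds2) = ds1 @ take (Suc (length pre)) ds2" by (rule takeeq)
    then have "x = sum_list (take i (ds1 @ ds2))" using d(3) by simp
    moreover have "run_ok 0 ts (ds1 @ ds2)" using runs d by blast
    ultimately show "x \<in> Ttimes ts i" unfolding Ttimes_def run_along_def by blast
  qed
  have widA: "width ts (i - 1) = Sup (ereal ` A) - Inf (ereal ` A)"
  proof (cases "0 < m")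
    case True
    have "Ttimes ts m = A"
    proof (intro equalityI subsetI)
      fix x assume "x \<in> Ttimes ts m"
      then obtain ds where x: "x = sum_list (take m ds)" "run_ok 0 ts ds"
        unfolding Ttimes_def run_along_def by blast
      then obtain ds1 ds2 where d: "ds = ds1 @ ds2" "run_ok 0 ts1 ds1" "run_ok 0 ts2 ds2" using runs by blast
      have "length ds1 = m" using run_ok_length[OF d(2)] lts1 by simp
      then have "x = sum_list ds1" using x(1) d(1) by simp
      then show "x \<in> A" using d(2) unfolding A_def by blast
    next
      fix x assume "x \<in> A"
      then obtain ds1 where d: "run_ok 0 ts1 ds1" "x = sum_list ds1" unfolding A_def by blast
      have "length ds1 = m" using run_ok_length[OF d(1)] lts1 by simp
      then have "x = sum_list (take m (ds1 @ d02))" using d(2) by simp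
      moreover have "run_ok 0 ts (ds1 @ d02)" using runs d d0 by blast
      ultimately show "x \<in> Ttimes ts m" unfolding Ttimes_def run_along_def by blast
    qed
    then show ?thesis using wid True unfolding s_len_def by simp
  next
    case False
    then have "ts1 = []" using lts1 by simp
    then have "{ds1. run_ok 0 ts1 ds1} = {[]}" by auto
    then have "A = {0}" unfolding A_def by simp
    then show ?thesis using wid False by simp
  qed
  have IA0: "0 \<le> Inf (ereal ` A)" using Ann by (intro Inf_greatest) auto
  obtain a0 where a0: "a0 \<in> A" using Ane by blast
  have "Inf (ereal ` A) \<le> ereal a0" using a0 by (intro Inf_lower) simp
  then obtain ia where ia: "Inf (ereal ` A) = ereal ia" using IA0 by (cases "Inf (ereal ` A)") auto
  have IAS: "ereal ia \<le> Sup (ereal ` A)" using Ane ia Inf_le_Sup[of "ereal ` A"] by simp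
  have IBS: "ereal (lval (lst None pre) t) \<le> Sup (ereal ` B)" using sres Inf_le_Sup[of "ereal ` B"] by simp
  have U: "upper_adj ts ! (i - 1) = hd (upper_adj (t # post))"
  proof -
    have "upper_adj ts ! (i - 1) = hd (drop (i - 1) (upper_adj ts))" using i1 by (simp add: hd_drop_conv_nth)
    also have "\<dots> = hd (upper_adj (drop (i - 1) ts))" by (simp only: drop_upper_adj)
    finally show ?thesis by (simp only: dt)
  qed
  have lst1: "lst None ts1 = None"
  proof (cases "0 < m")
    case True then show ?thesis using lastts1 lst_reset by blast
  next
    case False then show ?thesis using lts1 by simp
  qed
  have L: "lower_adj None ts ! (i - 1) = lval (lst None pre) t"
  proof -
    have "lower_adj None ts = lower_adj None ts1 @ (lower_adj None pre @ lower_adj (lst None pre) (t # post))"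
      unfolding ts ts2 lower_adj_append lst1 ..
    moreover have "i - 1 = length (lower_adj None ts1) + length (lower_adj None pre)"
      using lts1 lpre mle by simp
    ultimately show ?thesis by (simp add: nth_append lower_adj_Cons' del: lower_adj.simps(2))
  qed
  have "s_len ts i = (Sup (ereal ` A) + Sup (ereal ` B)) - (ereal ia + ereal (lval (lst None pre) t))"
    unfolding s_len_def TT sup_sum[OF Ane sres(1)] inf_sum[OF Ane sres(1) Ann sres(2)] ia sres(4) ..
  also have "\<dots> = (Sup (ereal ` A) - ereal ia) + max (Sup (ereal ` B) - ereal (lval (lst None pre) t)) 0"
    by (rule ereal_alg[OF IAS IBS])
  also have "\<dots> = width ts (i - 1) + dur ts i"
    unfolding widA ia dur_def U L sres(3) ..
  finally show "s_len ts i = width ts (i - 1) + dur ts i" .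
qed


end
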